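(* Let $g=\theta\circ\lambda:\mathbf{S}^n\to[-\infty,\infty]$ be a spectral function with symmetric $\theta:\mathbb{R}^n\to[-\infty,\infty]$, and assume $\theta$ is locally Lipschitz continuous relative to its domain. Then for any $X\in\mathbf{S}^n$ with $g(X)$ finite and any $v\in\mathbb{R}^n$, $$\mathrm{d}\theta(\lambda(X))(v)=\mathrm{d}g\big(\mathrm{Diag}(\lambda(X))\big)(\mathrm{Diag}(v)).$$ In particular, if $C\subset\mathbf{S}^n$ is a spectral set with $C=\{X:\lambda(X)\in\Theta\}$ for a symmetric set $\Theta\subset\mathbb{R}^n$, then for every $X\in C$, $$T_\Theta(\lambda(X))=\{v\in\mathbb{R}^n:\ \mathrm{Diag}(v)\in T_C(\mathrm{Diag}(\lambda(X)))\}.$$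
   Context: $\mathbf{S}^n$: real symmetric $n\times n$ matrices with trace inner product and Frobenius norm. $\lambda(X)$: eigenvalues of $X$ in nonincreasing order; $\mathrm{Diag}(x)$: diagonal matrix with diagonal $x$. $\theta$ is symmetric if $\theta(Px)=\theta(x)$ for all permutation matrices $P$; a set $\Theta$ is symmetric if its indicator is symmetric; $g$ is spectral if $g(U^\top XU)=g(X)$ for all orthogonal $U$ (then $g=\theta\circ\lambda$ with $\theta(x)=g(\mathrm{Diag}(x))$); $C$ is a spectral set if its indicator is spectral. A function $f$ is locally Lipschitz continuous relative to a set $D\subset\mathrm{dom}\,f$ around $\bar x\in D$ ($f(\bar x)$ finite) if there exist $\ell\ge0$ and a neighborhood $V$ of $\bar x$ with $|f(x)-f(y)|\le\ell\|x-y\|$ for $x,y\in V\cap D$; it is locally Lipschitz continuous relative to its domain if this holds around every point of $\mathrm{dom}\,f$ with $D=\mathrm{dom}\,f$. Subderivative: $\mathrm{d}f(\bar x)(\bar w)=\liminf_{t\downarrow0,\,w\to\bar w}\frac{f(\bar x+tw)-f(\bar x)}{t}$. Tangent cone: $T_C(\bar x)=\{w:\exists t_k\downarrow0,\ w_k\to w,\ \bar x+t_kw_k\in C\}$. *)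

theory Defs
  imports "HOL-Analysis.Analysis" "HOL-Library.Extended_Real"
begin

text \<open>Ambient space: n x n real matrices, indexed by a finite linearly ordered type 'n
  (so n = CARD('n) and the order on 'n fixes the ordering 1..n of coordinates).
  The norm on real^'n^'n is the Frobenius norm.\<close>

definition symmats :: "(real^'n^'n) set" where
  "symmats = {X. transpose X = X}"

definition Diag :: "real^'n \<Rightarrow> real^'n^'n" where
  "Diag x = (\<chi> i j. if i = j then x $ i else 0)"

definition eigvals :: "real^('n::{finite,linorder})^('n::{finite,linorder}) \<Rightarrow> real^('n::{finite,linorder})" where
  "eigvals X = (THE x. (\<forall>i j. i \<le> j \<longrightarrow> x $ j \<le> x $ i) \<and>
                      (\<forall>t. det (mat t - X) = (\<Prod>i\<in>UNIV. t - x $ i)))"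

definition symmetric_fun :: "(real^'n \<Rightarrow> 'b) \<Rightarrow> bool" where
  "symmetric_fun f \<longleftrightarrow> (\<forall>p x. p permutes (UNIV::'n set) \<longrightarrow> f (\<chi> i. x $ p i) = f x)"

definition symmetric_set :: "(real^'n) set \<Rightarrow> bool" where
  "symmetric_set A \<longleftrightarrow> symmetric_fun (\<lambda>x. x \<in> A)"

definition edom :: "('a \<Rightarrow> ereal) \<Rightarrow> 'a set" where
  "edom f = {x. f x < \<infinity>}"

definition loc_lipschitz_rel :: "('a::real_normed_vector \<Rightarrow> ereal) \<Rightarrow> 'a set \<Rightarrow> 'a \<Rightarrow> bool" where
  "loc_lipschitz_rel f D xb \<longleftrightarrow> xb \<in> D \<and> D \<subseteq> edom f \<and> \<bar>f xb\<bar> \<noteq> \<infinity> \<and>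
     (\<exists>l V. l \<ge> 0 \<and> open V \<and> xb \<in> V \<and>
        (\<forall>x\<in>V \<inter> D. \<forall>y\<in>V \<inter> D. \<bar>f x - f y\<bar> \<le> ereal (l * norm (x - y))))"

definition loc_lipschitz_on_dom :: "('a::real_normed_vector \<Rightarrow> ereal) \<Rightarrow> bool" where
  "loc_lipschitz_on_dom f \<longleftrightarrow> (\<forall>x\<in>edom f. loc_lipschitz_rel f (edom f) x)"

definition subderiv_on :: "'a::real_normed_vector set \<Rightarrow> ('a \<Rightarrow> ereal) \<Rightarrow> 'a \<Rightarrow> 'a \<Rightarrow> ereal" where
  "subderiv_on E f xb wb =
     Liminf (at_right (0::real) \<times>\<^sub>F inf (nhds wb) (principal E))
       (\<lambda>(t, w). (f (xb + t *\<^sub>R w) - f xb) / ereal t)"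

abbreviation subderiv :: "('a::real_normed_vector \<Rightarrow> ereal) \<Rightarrow> 'a \<Rightarrow> 'a \<Rightarrow> ereal" where
  "subderiv f \<equiv> subderiv_on UNIV f"

definition tangent_cone :: "'a::real_normed_vector set \<Rightarrow> 'a \<Rightarrow> 'a set" where
  "tangent_cone C xb = {w. \<exists>t wk. (\<forall>k. t k > 0 \<and> xb + t k *\<^sub>R wk k \<in> C) \<and>
                              t \<longlonglongrightarrow> 0 \<and> wk \<longlonglongrightarrow> w}"

end

theory Submission
  imports Defs "HOL-Computational_Algebra.Polynomial" "HOL-Combinatorics.Permutations"
begin

definition msetv :: "real^'n \<Rightarrow> real multiset" where
  "msetv a = image_mset (($) a) (mset_set UNIV)"

definition sorted_desc :: "real^'n::{finite,linorder} \<Rightarrow> bool" where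
  "sorted_desc a \<longleftrightarrow> (\<forall>i j. i \<le> j \<longrightarrow> a$j \<le> a$i)"

lemma count_msetv: "count (msetv a) c = card {i. a$i = c}"
  unfolding msetv_def by (simp add: count_image_mset_eq_card_vimage)

lemma perm_exists:
  fixes a b :: "real^'n"
  assumes "msetv a = msetv b"
  shows "\<exists>p. p permutes UNIV \<and> (\<forall>i. a$i = b$(p i))"
proof -
  have cc: "card {i. a$i = c} = card {i. b$i = c}" for c
    using assms by (metis count_msetv)
  have "\<exists>h. bij_betw h {i. a$i = c} {i. b$i = c}" for c
    by (rule finite_same_card_bij) (auto simp: cc)
  then obtain F where F: "\<And>c. bij_betw (F c) {i. a$i = c} {i. b$i = c}" by metis
  define p where "p i = F (a$i) i" for i
  have bp: "b$(p i) = a$i" for i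
    using bij_betwE[OF F[of "a$i"]] unfolding p_def by auto
  have "inj p"
  proof (rule injI)
    fix i j assume "p i = p j"
    then have "a$i = a$j" using bp by metis
    then show "i = j" using \<open>p i = p j\<close> bij_betw_imp_inj_on[OF F[of "a$i"]]
      unfolding p_def by (auto simp: inj_on_def)
  qed
  then have "bij p" using finite_UNIV_inj_surj[of p] by (simp add: bij_def)
  then have "p permutes UNIV" by (rule bij_imp_permutes) auto
  then show ?thesis using bp by metis
qed

lemma msetv_perm:
  fixes a :: "real^'n"
  assumes "p permutes UNIV"
  shows "msetv (\<chi> i. a$(p i)) = msetv a"
proof -
  have e: "(($) (\<chi> i. a$(p i))) = (\<lambda>i. a$(p i))" by auto
  have "msetv (\<chi> i. a$(p i)) = image_mset (($) a) (image_mset p (mset_set UNIV))"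
    unfolding msetv_def e by (simp add: image_mset.compositionality o_def)
  also have "image_mset p (mset_set UNIV) = mset_set (p ` UNIV)"
    by (rule image_mset_mset_set) (meson assms permutes_inj)
  also have "p ` UNIV = UNIV" using assms by (simp add: permutes_image)
  finally show ?thesis unfolding msetv_def .
qed

definition pm :: "real multiset \<Rightarrow> real poly" where
  "pm A = prod_mset (image_mset (\<lambda>c. [:-c,1:]) A)"

lemma poly_pm: "poly (pm A) t = prod_mset (image_mset (\<lambda>c. t - c) A)"
  unfolding pm_def by (induction A) (auto simp: algebra_simps)

lemma pm_inj: "pm A = pm B \<Longrightarrow> A = B"
proof (induction A arbitrary: B)
  case empty
  show ?case
  proof (rule ccontr)
    assume "{#} \<noteq> B"
    then obtain b where "b \<in># B" by (metis multiset_nonemptyE)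
    then have "poly (pm B) b = 0" unfolding poly_pm
      by (auto simp: prod_mset_zero_iff)
    then show False using empty by (simp add: pm_def)
  qed
next
  case (add a A)
  have "poly (pm B) a = 0" using add.prems[symmetric] by (simp add: pm_def)
  then obtain b where "b \<in># B" "a - b = 0" unfolding poly_pm by (auto simp: prod_mset_zero_iff)
  then obtain B' where B: "B = add_mset a B'" by (metis eq_iff_diff_eq_0 multi_member_split)
  have e1: "pm B = [:-a,1:] * pm B'" by (simp add: B pm_def)
  have e2: "pm (add_mset a A) = [:-a,1:] * pm A" by (simp add: pm_def)
  have nz: "[:-a,1:] \<noteq> (0::real poly)" by simp
  have "pm A = pm B'" using mult_left_cancel[OF nz] add.prems e1 e2 by metis
  then show ?case using add.IH B by simp
qed

lemma prod_msetv: "(\<Prod>i\<in>UNIV. (t - a$i)) = prod_mset (image_mset (\<lambda>c. t - c) (msetv a))"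
  unfolding msetv_def prod_unfold_prod_mset by (simp add: image_mset.compositionality o_def)

lemma poly_msetv:
  fixes a b :: "real^'n"
  assumes "\<And>t. (\<Prod>i\<in>UNIV. (t - a$i)) = (\<Prod>i\<in>UNIV. (t - b$i))"
  shows "msetv a = msetv b"
proof -
  have "poly (pm (msetv a)) = poly (pm (msetv b))"
    using assms by (auto simp: poly_pm prod_msetv[symmetric])
  then show ?thesis by (simp add: poly_eq_poly_eq_iff pm_inj)
qed

lemma msetv_prod:
  fixes a b :: "real^'n"
  assumes "msetv a = msetv b"
  shows "(\<Prod>i\<in>UNIV. (t - a$i)) = (\<Prod>i\<in>UNIV. (t - b$i))"
  by (simp add: prod_msetv assms)

lemma sorted_key:
  fixes x y :: "real^'n::{finite,linorder}"
  assumes sx: "sorted_desc x" and sy: "sorted_desc y"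
    and cxy: "\<And>c. card {i. c \<le> x$i} = card {i. c \<le> y$i}"
  shows "\<not> x$k < y$k"
  proof
  assume lt: "x$k < y$k"
  have "{..k} \<subseteq> {i. y$k \<le> y$i}" using sy unfolding sorted_desc_def by auto
  then have "card {..k} \<le> card {i. y$k \<le> y$i}" by (intro card_mono) auto
  moreover have "{i. y$k \<le> x$i} \<subseteq> {..<k}"
  proof
    fix j assume "j \<in> {i. y$k \<le> x$i}"
    then have "y$k \<le> x$j" by simp
    show "j \<in> {..<k}"
    proof (rule ccontr)
      assume "j \<notin> {..<k}"
      then have "k \<le> j" by auto
      then have "x$j \<le> x$k" using sx unfolding sorted_desc_def by auto
      then show False using lt \<open>y$k \<le> x$j\<close> by auto
    qed
  qed
  then have "card {i. y$k \<le> x$i} \<le> card {..<k}" by (intro card_mono) auto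
  moreover have "card {..<k} < card {..k}"
    by (intro psubset_card_mono) auto
  ultimately show False using cxy[of "y$k"] by linarith
qed

lemma sorted_unique:
  fixes a b :: "real^'n::{finite,linorder}"
  assumes sa: "sorted_desc a" and sb: "sorted_desc b" and m: "msetv a = msetv b"
  shows "a = b"
proof -
  obtain p where p: "p permutes UNIV" "\<And>i. a$i = b$(p i)" using perm_exists[OF m] by blast
  have cnt: "card {i. c \<le> a$i} = card {i. c \<le> b$i}" for c
  proof -
    have "p ` {i. c \<le> a$i} = {i. c \<le> b$i}"
    proof
      show "p ` {i. c \<le> a$i} \<subseteq> {i. c \<le> b$i}" using p by auto
      show "{i. c \<le> b$i} \<subseteq> p ` {i. c \<le> a$i}"
      proof
        fix j assume "j \<in> {i. c \<le> b$i}"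
        obtain i where "p i = j" using p(1) by (metis permutes_univ)
        then show "j \<in> p ` {i. c \<le> a$i}" using \<open>j \<in> _\<close> p(2) by auto
      qed
    qed
    moreover have "inj p" using p(1) permutes_inj by blast
    ultimately show ?thesis by (metis card_image inj_on_subset subset_UNIV)
  qed
  show ?thesis
  proof (rule vec_eq_iff[THEN iffD2], rule allI)
    fix k
    have "\<not> b$k < a$k" by (rule sorted_key[OF sb sa]) (simp add: cnt)
    then show "a$k = b$k" using sorted_key[OF sa sb cnt, of k] by linarith
  qed
qed

definition rk :: "'n::{finite,linorder} \<Rightarrow> nat" where "rk i = card {j. j < i}"

lemma rk_mono: "i \<le> j \<Longrightarrow> rk i \<le> rk j"
  unfolding rk_def by (intro card_mono) auto

lemma rk_strict: "i < j \<Longrightarrow> rk i < rk j"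
  unfolding rk_def by (intro psubset_card_mono) auto

lemma rk_less: "rk (i::'n::{finite,linorder}) < CARD('n)"
  unfolding rk_def by (intro psubset_card_mono) auto

lemma rk_image: "rk ` (UNIV::'n::{finite,linorder} set) = {..<CARD('n)}"
proof -
  have inj: "inj (rk::'n \<Rightarrow> nat)"
    by (rule injI) (metis less_irrefl linorder_neqE rk_strict)
  have "rk ` (UNIV::'n set) \<subseteq> {..<CARD('n)}" using rk_less by auto
  moreover have "card (rk ` (UNIV::'n set)) = card {..<CARD('n)}"
    using inj by (simp add: card_image)
  ultimately show ?thesis by (intro card_subset_eq) auto
qed

lemma sorted_exists:
  fixes \<mu> :: "real^'n::{finite,linorder}"
  shows "\<exists>a::real^'n::{finite,linorder}. sorted_desc a \<and> msetv a = msetv \<mu>"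
proof -
  define L where "L = rev (sorted_list_of_multiset (msetv \<mu>))"
  have lenL: "length L = CARD('n)" unfolding L_def msetv_def
    by (metis length_rev mset_sorted_list_of_multiset size_image_mset size_mset size_mset_set)
  have srt: "L ! j \<le> L ! i" if "i \<le> j" "j < length L" for i j
  proof -
    let ?S = "sorted_list_of_multiset (msetv \<mu>)"
    have "length ?S = length L" unfolding L_def by simp
    have s: "sorted ?S" by simp
    have "L ! j = ?S ! (length ?S - Suc j)" "L ! i = ?S ! (length ?S - Suc i)"
      unfolding L_def using that \<open>length ?S = length L\<close> by (auto simp: rev_nth)
    moreover have "?S ! (length ?S - Suc j) \<le> ?S ! (length ?S - Suc i)"
      using that \<open>length ?S = length L\<close> by (intro sorted_nth_mono[OF s]) auto
    ultimately show ?thesis by simp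
  qed
  define a :: "real^'n::{finite,linorder}" where "a = (\<chi> i. L ! rk i)"
  have "sorted_desc a" unfolding sorted_desc_def
  proof (intro allI impI)
    fix i j :: "'n::{finite,linorder}" assume "i \<le> j"
    have "rk j < CARD('n)" by (rule rk_less)
    then show "a$j \<le> a$i" unfolding a_def using srt[of "rk i" "rk j"] rk_mono[OF \<open>i \<le> j\<close>] lenL by simp
  qed
  moreover have "msetv a = msetv \<mu>"
  proof -
    have e: "(($) a) = (\<lambda>i. L ! rk i)" unfolding a_def by auto
    have "msetv a = image_mset ((!) L) (image_mset rk (mset_set (UNIV::'n::{finite,linorder} set)))"
      unfolding msetv_def e by (simp add: image_mset.compositionality o_def)
    also have "image_mset rk (mset_set (UNIV::'n set)) = mset_set {..<CARD('n)}"
    proof -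
      have "inj (rk::'n \<Rightarrow> nat)" by (rule injI) (metis less_irrefl linorder_neqE rk_strict)
      then show ?thesis by (metis image_mset_mset_set rk_image)
    qed
    also have "image_mset ((!) L) (mset_set {..<CARD('n)}) = mset (map ((!) L) [0..<length L])"
      by (simp add: lenL mset_map flip: mset_upt atLeast0LessThan)
    also have "\<dots> = mset L" by (simp add: map_nth)
    also have "\<dots> = msetv \<mu>" unfolding L_def by simp
    finally show ?thesis .
  qed
  ultimately show ?thesis by blast
qed

lemma sym_inner:
  fixes M :: "real^'n^'n"
  assumes "transpose M = M"
  shows "x \<bullet> (M *v y) = (M *v x) \<bullet> y"
proof -
  have s: "M$i$j = M$j$i" for i j using assms by (metis transpose_def vec_lambda_beta)
  have "x \<bullet> (M *v y) = (\<Sum>i\<in>UNIV. \<Sum>j\<in>UNIV. x$i * M$i$j * y$j)"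
    by (simp add: inner_vec_def matrix_vector_mult_def sum_distrib_left mult.assoc)
  also have "\<dots> = (\<Sum>j\<in>UNIV. \<Sum>i\<in>UNIV. x$i * M$i$j * y$j)" by (rule sum.swap)
  also have "\<dots> = (\<Sum>j\<in>UNIV. \<Sum>i\<in>UNIV. x$i * M$j$i * y$j)"
    by (intro sum.cong refl) (metis s)
  also have "\<dots> = (M *v x) \<bullet> y"
    by (simp add: inner_vec_def matrix_vector_mult_def sum_distrib_left sum_distrib_right mult_ac)
  finally show ?thesis .
qed

lemma quad_arg:
  fixes a b :: real
  assumes "\<And>s. 2 * s * a + s^2 * b \<le> 0"
  shows "a = 0"
proof (rule ccontr)
  assume "a \<noteq> 0"
  define Q where "Q = \<bar>b\<bar> + 1"
  have Q: "Q > 0" "b \<ge> - Q + 1" unfolding Q_def by auto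
  have h: "2 * (a/Q) * a + (a/Q)^2 * b \<le> 0" by (rule assms)
  have "2 * (a/Q) * a + (a/Q)^2 * b = (a^2/Q^2) * (2*Q + b)"
    using Q by (simp add: field_simps power2_eq_square)
  moreover have "(a^2/Q^2) * (2*Q + b) > 0"
    using Q \<open>a \<noteq> 0\<close> by (intro mult_pos_pos) auto
  ultimately show False using h by linarith
qed

lemma spec_sub:
  fixes M :: "real^'n^'n"
  assumes sym: "transpose M = M"
  shows "subspace S \<Longrightarrow> (\<forall>x\<in>S. M *v x \<in> S) \<Longrightarrow>
    \<exists>B. B \<subseteq> S \<and> pairwise orthogonal B \<and> (\<forall>b\<in>B. norm b = 1) \<and>
        (\<forall>b\<in>B. \<exists>c. M *v b = c *\<^sub>R b) \<and> S \<subseteq> span B"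
proof (induct "dim S" arbitrary: S rule: less_induct)
  case less
  show ?case
  proof (cases "S \<subseteq> {0}")
    case True
    then show ?thesis by (intro exI[of _ "{}"]) auto
  next
    case False
    then obtain y where y: "y \<in> S" "y \<noteq> 0" by auto
    define K where "K = S \<inter> sphere 0 1"
    define f where "f x = x \<bullet> (M *v x)" for x
    have "compact K" unfolding K_def
      by (metis Int_commute closed_subspace compact_Int_closed compact_sphere less.prems(1))
    moreover have "K \<noteq> {}"
    proof -
      have "(1/norm y) *\<^sub>R y \<in> K" unfolding K_def using y less.prems(1)
        by (simp add: subspace_mul)
      then show ?thesis by auto
    qed
    moreover have "continuous_on K f" unfolding f_def
      by (intro continuous_intros linear_continuous_on)
        (simp add: linear_conv_bounded_linear[symmetric] matrix_vector_mul_linear)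
    ultimately obtain x where x: "x \<in> K" "\<And>z. z \<in> K \<Longrightarrow> f z \<le> f x"
      using continuous_attains_sup by metis
    define c where "c = f x"
    have xS: "x \<in> S" and nx: "norm x = 1" using x(1) unfolding K_def by auto
    have xx: "x \<bullet> x = 1" using nx by (simp add: norm_eq_1)
    have fhom: "f (r *\<^sub>R z) = r^2 * f z" for r z
      unfolding f_def by (simp add: matrix_vector_mult_scaleR power2_eq_square)
    have bound: "f z \<le> c * (z \<bullet> z)" if "z \<in> S" for z
    proof (cases "z = 0")
      case True then show ?thesis by (simp add: f_def)
    next
      case False
      have "(1/norm z) *\<^sub>R z \<in> K" unfolding K_def using that False less.prems(1)
        by (simp add: subspace_mul)
      then have "f ((1/norm z) *\<^sub>R z) \<le> c" using x(2) c_def by auto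
      then have "(1/norm z)^2 * f z \<le> c" by (simp add: fhom)
      moreover have "(1/norm z)^2 = 1 / (z \<bullet> z)" using False
        by (simp add: power2_norm_eq_inner[symmetric] power_divide)
      moreover have "z \<bullet> z > 0" using False by simp
      ultimately show ?thesis by (simp add: field_simps)
    qed
    have perp: "y \<bullet> (M *v x) = 0" if "y \<in> S" "y \<bullet> x = 0" for y
    proof -
      define a where "a = y \<bullet> (M *v x)"
      have "2 * s * a + s^2 * (f y - c * (y \<bullet> y)) \<le> 0" for s
      proof -
        have zS: "x + s *\<^sub>R y \<in> S" using xS that(1) less.prems(1)
          by (simp add: subspace_add subspace_mul)
        have "f (x + s *\<^sub>R y) = f x + 2 * s * a + s^2 * f y"
          unfolding f_def a_def using sym_inner[OF sym, of x y]
          by (simp add: matrix_vector_right_distrib matrix_vector_mult_scaleR inner_add_left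
              inner_add_right power2_eq_square algebra_simps inner_commute)
        moreover have "(x + s *\<^sub>R y) \<bullet> (x + s *\<^sub>R y) = 1 + s^2 * (y \<bullet> y)"
          using xx that(2) by (simp add: inner_add_left inner_add_right power2_eq_square inner_commute)
        ultimately show ?thesis using bound[OF zS] c_def by (simp add: algebra_simps)
      qed
      then show ?thesis unfolding a_def by (rule quad_arg)
    qed
    define w where "w = M *v x - c *\<^sub>R x"
    have wS: "w \<in> S" unfolding w_def using less.prems xS by (simp add: subspace_diff subspace_mul)
    have wx: "w \<bullet> x = 0" unfolding w_def c_def f_def using xx
      by (simp add: inner_diff_left inner_diff_right inner_commute)
    have "w \<bullet> w = 0"
    proof -
      have "w \<bullet> w = w \<bullet> (M *v x) - c * (w \<bullet> x)" unfolding w_def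
        by (simp add: inner_diff_right)
      then show ?thesis using perp[OF wS wx] wx by simp
    qed
    then have eig: "M *v x = c *\<^sub>R x" unfolding w_def by simp
    define S' where "S' = {z \<in> S. z \<bullet> x = 0}"
    have sub': "subspace S'" unfolding S'_def subspace_def using less.prems(1)
      by (auto simp: subspace_add subspace_mul subspace_0 inner_add_left)
    have inv': "\<forall>z\<in>S'. M *v z \<in> S'"
    proof
      fix z assume "z \<in> S'"
      then have "z \<in> S" "z \<bullet> x = 0" unfolding S'_def by auto
      have "(M *v z) \<bullet> x = z \<bullet> (M *v x)" using sym_inner[OF sym, of z x] by simp
      also have "\<dots> = 0" using eig \<open>z \<bullet> x = 0\<close> by simp
      finally show "M *v z \<in> S'" unfolding S'_def using less.prems(2) \<open>z \<in> S\<close> by auto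
    qed
    have "dim S' < dim S"
    proof (rule dim_psubset)
      have "x \<notin> S'" unfolding S'_def using xx by auto
      moreover have "S' \<subseteq> S" unfolding S'_def by auto
      ultimately have "S' \<subset> S" using xS by blast
      then show "span S' \<subset> span S" using sub' less.prems(1) by (metis span_eq_iff)
    qed
    then obtain B' where B': "B' \<subseteq> S'" "pairwise orthogonal B'" "\<forall>b\<in>B'. norm b = 1"
        "\<forall>b\<in>B'. \<exists>c. M *v b = c *\<^sub>R b" "S' \<subseteq> span B'"
      using less.hyps[OF _ sub' inv'] by blast
    show ?thesis
    proof (intro exI[of _ "insert x B'"] conjI)
      show "insert x B' \<subseteq> S" using B'(1) xS unfolding S'_def by auto
      show "pairwise orthogonal (insert x B')"
        using B'(1,2) unfolding S'_def pairwise_insert orthogonal_def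
        by (auto simp: inner_commute)
      show "\<forall>b\<in>insert x B'. norm b = 1" using B'(3) nx by auto
      show "\<forall>b\<in>insert x B'. \<exists>c. M *v b = c *\<^sub>R b" using B'(4) eig by auto
      show "S \<subseteq> span (insert x B')"
      proof
        fix z assume "z \<in> S"
        have "z - (z \<bullet> x) *\<^sub>R x \<in> S'" unfolding S'_def using \<open>z \<in> S\<close> xS xx less.prems(1)
          by (simp add: subspace_diff subspace_mul inner_diff_left)
        then show "z \<in> span (insert x B')" using B'(5) by (auto simp: span_insert)
      qed
    qed
  qed
qed

lemma mm_diff_left: "(A::real^'n^'n) ** (B - C) = A ** B - A ** C"
  by (simp add: matrix_matrix_mult_def vec_eq_iff sum_subtractf algebra_simps)

lemma mm_diff_right: "((B::real^'n^'n) - C) ** A = B ** A - C ** A"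
  by (simp add: matrix_matrix_mult_def vec_eq_iff sum_subtractf algebra_simps)

lemma mm_mat_right: "(A::real^'n^'n) ** mat t = t *\<^sub>R A"
  by (simp add: matrix_matrix_mult_def vec_eq_iff mat_def if_distrib cong: if_cong)

lemma mm_scaleR_left: "(t *\<^sub>R (A::real^'n^'n)) ** B = t *\<^sub>R (A ** B)"
  by (simp add: matrix_matrix_mult_def vec_eq_iff sum_distrib_left algebra_simps)

lemma mat_scaleR: "t *\<^sub>R (mat 1 :: real^'n^'n) = mat t"
  by (simp add: vec_eq_iff mat_def)

lemma det_Diag_char: "det (mat t - Diag \<mu>) = (\<Prod>i\<in>UNIV. t - \<mu>$i)"
proof -
  have "det (mat t - Diag \<mu>) = (\<Prod>i\<in>UNIV. (mat t - Diag \<mu>)$i$i)"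
    by (rule det_diagonal) (simp add: Diag_def mat_def)
  then show ?thesis by (simp add: Diag_def mat_def)
qed

lemma spectral:
  fixes M :: "real^'n^'n"
  assumes sym: "transpose M = M"
  shows "\<exists>(q::'n \<Rightarrow> real^'n) (\<mu>::real^'n). (\<forall>i j. q i \<bullet> q j = (if i = j then 1 else 0)) \<and>
           (\<forall>i. M *v q i = \<mu>$i *\<^sub>R q i)"
proof -
  obtain B where B: "pairwise orthogonal B" "\<forall>b\<in>B. norm b = 1"
      "\<forall>b\<in>B. \<exists>c. M *v b = c *\<^sub>R b" "UNIV \<subseteq> span B"
    using spec_sub[OF sym subspace_UNIV] by auto
  have "0 \<notin> B" using B(2) by force
  then have ind: "independent B" using B(1) pairwise_orthogonal_independent by blast
  then have fin: "finite B" using indep_card_eq_dim_span by blast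
  have "card B = dim (UNIV :: (real^'n) set)"
    using ind B(4) by (intro basis_card_eq_dim) auto
  then have cB: "card B = CARD('n)" by (simp add: dim_UNIV)
  obtain q where q: "bij_betw q (UNIV::'n set) B"
    using finite_same_card_bij[of "UNIV::'n set" B] fin cB by auto
  define \<mu> :: "real^'n" where "\<mu> = (\<chi> i. SOME c. M *v q i = c *\<^sub>R q i)"
  have "q i \<bullet> q j = (if i = j then 1 else 0)" for i j
  proof (cases "i = j")
    case True
    have "q i \<in> B" using q bij_betwE by blast
    then show ?thesis using True B(2) by (simp add: norm_eq_1)
  next
    case False
    then have "q i \<noteq> q j" using q by (metis bij_betw_imp_inj_on inj_def)
    moreover have "q i \<in> B" "q j \<in> B" using q bij_betwE by blast+
    ultimately show ?thesis using False B(1) by (auto simp: pairwise_def orthogonal_def)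
  qed
  moreover have "M *v q i = \<mu>$i *\<^sub>R q i" for i
  proof -
    have "q i \<in> B" using q bij_betwE by blast
    then have "\<exists>c. M *v q i = c *\<^sub>R q i" using B(3) by blast
    then have "M *v q i = (SOME c. M *v q i = c *\<^sub>R q i) *\<^sub>R q i" by (rule someI_ex)
    then show ?thesis unfolding \<mu>_def by simp
  qed
  ultimately show ?thesis by blast
qed

lemma det_spectral:
  fixes M :: "real^'n^'n" and q :: "'n \<Rightarrow> real^'n"
  assumes on: "\<And>i j. q i \<bullet> q j = (if i = j then 1 else 0)"
    and ev: "\<And>i. M *v q i = \<mu>$i *\<^sub>R q i"
  shows "det (mat t - M) = (\<Prod>i\<in>UNIV. t - \<mu>$i)"
proof -
  define Q :: "real^'n^'n" where "Q = (\<chi> r c. q c $ r)"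
  have "transpose Q ** Q = mat 1"
  proof -
    have "(transpose Q ** Q)$i$j = q i \<bullet> q j" for i j
      by (simp add: Q_def matrix_matrix_mult_def transpose_def inner_vec_def)
    then show ?thesis using on by (simp add: vec_eq_iff mat_def)
  qed
  then have oQ: "orthogonal_matrix Q" by (simp add: orthogonal_matrix)
  then have QQt: "Q ** transpose Q = mat 1" by (simp add: orthogonal_matrix_def)
  have MQ: "M ** Q = Q ** Diag \<mu>"
  proof -
    have "(M ** Q)$r$c = (M *v q c)$r" for r c
      by (simp add: Q_def matrix_matrix_mult_def matrix_vector_mult_def)
    moreover have "(Q ** Diag \<mu>)$r$c = \<mu>$c * q c $ r" for r c
      by (simp add: Q_def matrix_matrix_mult_def Diag_def if_distrib cong: if_cong)
    ultimately show ?thesis using ev by (simp add: vec_eq_iff)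
  qed
  have "M = Q ** Diag \<mu> ** transpose Q"
    by (metis MQ QQt matrix_mul_assoc matrix_mul_rid)
  then have "mat t - M = Q ** (mat t - Diag \<mu>) ** transpose Q"
    by (simp add: mm_diff_left mm_diff_right mm_mat_right mm_scaleR_left QQt mat_scaleR)
  then have "det (mat t - M) = det Q * det (mat t - Diag \<mu>) * det (transpose Q)"
    by (simp add: det_mul)
  moreover have "det Q * det (transpose Q) = 1"
    using det_orthogonal_matrix[OF oQ] by (auto simp: det_transpose)
  ultimately show ?thesis by (simp add: det_Diag_char)
qed

lemma eigvals_unique:
  fixes M :: "real^('n::{finite,linorder})^('n::{finite,linorder})"
  assumes s: "sorted_desc a" and d: "\<And>t. det (mat t - M) = (\<Prod>i\<in>UNIV. t - a$i)"
  shows "eigvals M = a"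
  unfolding eigvals_def
proof (rule the_equality)
  show "(\<forall>i j. i \<le> j \<longrightarrow> a $ j \<le> a $ i) \<and> (\<forall>t. det (mat t - M) = (\<Prod>i\<in>UNIV. t - a $ i))"
    using s d unfolding sorted_desc_def by auto
  fix b :: "real^('n::{finite,linorder})"
  assume "(\<forall>i j. i \<le> j \<longrightarrow> b $ j \<le> b $ i) \<and> (\<forall>t. det (mat t - M) = (\<Prod>i\<in>UNIV. t - b $ i))"
  then have sb: "sorted_desc b" and db: "\<And>t. det (mat t - M) = (\<Prod>i\<in>UNIV. t - b $ i)"
    unfolding sorted_desc_def by auto
  have "msetv b = msetv a" using d db by (intro poly_msetv) metis
  then show "b = a" using sorted_unique[OF sb s] by blast
qed

lemma eigvals_spec:
  fixes M :: "real^('n::{finite,linorder})^('n::{finite,linorder})" and q :: "'n::{finite,linorder} \<Rightarrow> real^('n::{finite,linorder})"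
  assumes on: "\<And>i j. q i \<bullet> q j = (if i = j then 1 else 0)"
    and ev: "\<And>i. M *v q i = \<mu>$i *\<^sub>R q i"
  shows "msetv (eigvals M) = msetv \<mu>" "sorted_desc (eigvals M)"
    "\<And>t. det (mat t - M) = (\<Prod>i\<in>UNIV. t - eigvals M $ i)"
proof -
  obtain a :: "real^('n::{finite,linorder})" where a: "sorted_desc a" "msetv a = msetv \<mu>" using sorted_exists by blast
  have d: "det (mat t - M) = (\<Prod>i\<in>UNIV. t - a$i)" for t
    using det_spectral[OF on ev] msetv_prod[OF a(2)] by simp
  have e: "eigvals M = a" by (rule eigvals_unique[OF a(1) d])
  show "msetv (eigvals M) = msetv \<mu>" "sorted_desc (eigvals M)"
    "\<And>t. det (mat t - M) = (\<Prod>i\<in>UNIV. t - eigvals M $ i)" using e a d by auto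
qed

lemma eigvals_Diag_sorted:
  fixes x :: "real^'n::{finite,linorder}"
  assumes "sorted_desc x" shows "eigvals (Diag x) = x"
  by (rule eigvals_unique[OF assms]) (rule det_Diag_char)

lemma eigvals_Diag_perm:
  fixes y :: "real^'n::{finite,linorder}"
  shows "\<exists>p. p permutes UNIV \<and> eigvals (Diag y) = (\<chi> i. y$(p i))"
proof -
  obtain a :: "real^('n::{finite,linorder})" where a: "sorted_desc a" "msetv a = msetv y" using sorted_exists by blast
  have "eigvals (Diag y) = a"
    by (rule eigvals_unique[OF a(1)]) (simp add: det_Diag_char msetv_prod[OF a(2)])
  moreover obtain p where "p permutes UNIV" "\<And>i. a$i = y$(p i)" using perm_exists[OF a(2)] by blast
  ultimately show ?thesis by (intro exI[of _ p]) (auto simp: vec_eq_iff)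
qed

lemma card_msetv:
  fixes x y :: "real^'n"
  assumes "msetv x = msetv y"
  shows "card {i. P (x$i)} = card {i. P (y$i)}"
proof -
  obtain p where p: "p permutes UNIV" "\<And>i. x$i = y$(p i)" using perm_exists[OF assms] by blast
  have "p ` {i. P (x$i)} = {i. P (y$i)}"
  proof
    show "p ` {i. P (x$i)} \<subseteq> {i. P (y$i)}" using p by auto
    show "{i. P (y$i)} \<subseteq> p ` {i. P (x$i)}"
    proof
      fix j assume "j \<in> {i. P (y$i)}"
      obtain i where "p i = j" using p(1) by (metis permutes_univ)
      then show "j \<in> p ` {i. P (x$i)}" using \<open>j \<in> _\<close> p(2) by auto
    qed
  qed
  moreover have "inj p" using p(1) permutes_inj by blast
  ultimately show ?thesis by (metis card_image inj_on_subset subset_UNIV)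
qed

lemma on_inj:
  fixes q :: "'n \<Rightarrow> real^'m"
  assumes on: "\<And>i j. q i \<bullet> q j = (if i = j then 1 else 0)"
  shows "inj q"
proof (rule injI)
  fix i j assume "q i = q j"
  then have "q i \<bullet> q j = 1" using on[of j j] by simp
  then show "i = j" using on[of i j] by (cases "i = j") auto
qed

lemma on_span_repr:
  fixes q :: "'n::finite \<Rightarrow> real^'m"
  assumes on: "\<And>i j. q i \<bullet> q j = (if i = j then 1 else 0)"
    and z: "z \<in> span (q ` I)"
  shows "\<exists>\<alpha>. z = (\<Sum>i\<in>I. \<alpha> i *\<^sub>R q i)"
proof -
  have "finite (q ` I)" by simp
  then obtain u where "z = (\<Sum>v\<in>q ` I. u v *\<^sub>R v)" using z span_finite by blast
  also have "\<dots> = (\<Sum>i\<in>I. u (q i) *\<^sub>R q i)"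
  proof -
    have "inj_on q I" using on_inj[OF on] by (rule inj_on_subset) simp
    then show ?thesis by (simp add: sum.reindex)
  qed
  finally show ?thesis by (intro exI[of _ "\<lambda>i. u (q i)"])
qed

lemma on_quad:
  fixes q :: "'n::finite \<Rightarrow> real^'m" and M :: "real^'m^'m"
  assumes on: "\<And>i j. q i \<bullet> q j = (if i = j then 1 else 0)"
    and ev: "\<And>i. M *v q i = \<mu> i *\<^sub>R q i"
  shows "(\<Sum>i\<in>I. \<alpha> i *\<^sub>R q i) \<bullet> (\<Sum>i\<in>I. \<alpha> i *\<^sub>R q i) = (\<Sum>i\<in>I. (\<alpha> i)^2)"
    "(\<Sum>i\<in>I. \<alpha> i *\<^sub>R q i) \<bullet> (M *v (\<Sum>i\<in>I. \<alpha> i *\<^sub>R q i)) = (\<Sum>i\<in>I. (\<alpha> i)^2 * \<mu> i)"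
proof -
  have fin: "finite I" by simp
  have Mz: "M *v (\<Sum>i\<in>I. \<alpha> i *\<^sub>R q i) = (\<Sum>i\<in>I. (\<alpha> i * \<mu> i) *\<^sub>R q i)"
    using linear_sum[OF matrix_vector_mul_linear, of M "\<lambda>i. \<alpha> i *\<^sub>R q i" I]
    by (simp add: matrix_vector_mult_scaleR ev)
  have on': "c * (q i \<bullet> q j) = (if i = j then c else 0)" for c i j by (simp add: on)
  show "(\<Sum>i\<in>I. \<alpha> i *\<^sub>R q i) \<bullet> (\<Sum>i\<in>I. \<alpha> i *\<^sub>R q i) = (\<Sum>i\<in>I. (\<alpha> i)^2)"
    using fin by (simp add: inner_sum_left inner_sum_right on' power2_eq_square)
  show "(\<Sum>i\<in>I. \<alpha> i *\<^sub>R q i) \<bullet> (M *v (\<Sum>i\<in>I. \<alpha> i *\<^sub>R q i)) = (\<Sum>i\<in>I. (\<alpha> i)^2 * \<mu> i)"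
    unfolding Mz using fin by (simp add: inner_sum_left inner_sum_right on' power2_eq_square mult_ac)
qed

lemma ray_ge:
  fixes q :: "'n::finite \<Rightarrow> real^'m" and M :: "real^'m^'m"
  assumes on: "\<And>i j. q i \<bullet> q j = (if i = j then 1 else 0)"
    and ev: "\<And>i. M *v q i = \<mu> i *\<^sub>R q i"
    and z: "z \<in> span (q ` I)" and c: "\<And>i. i \<in> I \<Longrightarrow> c \<le> \<mu> i"
  shows "c * (z \<bullet> z) \<le> z \<bullet> (M *v z)"
proof -
  obtain \<alpha> where za: "z = (\<Sum>i\<in>I. \<alpha> i *\<^sub>R q i)" using on_span_repr[OF on z] by blast
  have "c * (\<Sum>i\<in>I. (\<alpha> i)^2) \<le> (\<Sum>i\<in>I. (\<alpha> i)^2 * \<mu> i)"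
    unfolding sum_distrib_left
  proof (intro sum_mono)
    fix i assume "i \<in> I"
    have "c * (\<alpha> i)^2 \<le> \<mu> i * (\<alpha> i)^2" by (rule mult_right_mono[OF c[OF \<open>i \<in> I\<close>]]) simp
    then show "c * (\<alpha> i)^2 \<le> (\<alpha> i)^2 * \<mu> i" by (simp only: mult.commute)
  qed
  then show ?thesis unfolding za on_quad[OF on ev] .
qed

lemma ray_le:
  fixes q :: "'n::finite \<Rightarrow> real^'m" and M :: "real^'m^'m"
  assumes on: "\<And>i j. q i \<bullet> q j = (if i = j then 1 else 0)"
    and ev: "\<And>i. M *v q i = \<mu> i *\<^sub>R q i"
    and z: "z \<in> span (q ` I)" and c: "\<And>i. i \<in> I \<Longrightarrow> \<mu> i \<le> c"
  shows "z \<bullet> (M *v z) \<le> c * (z \<bullet> z)"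
proof -
  obtain \<alpha> where za: "z = (\<Sum>i\<in>I. \<alpha> i *\<^sub>R q i)" using on_span_repr[OF on z] by blast
  have "(\<Sum>i\<in>I. (\<alpha> i)^2 * \<mu> i) \<le> c * (\<Sum>i\<in>I. (\<alpha> i)^2)"
    unfolding sum_distrib_left
  proof (intro sum_mono)
    fix i assume "i \<in> I"
    have "\<mu> i * (\<alpha> i)^2 \<le> c * (\<alpha> i)^2" by (rule mult_right_mono[OF c[OF \<open>i \<in> I\<close>]]) simp
    then show "(\<alpha> i)^2 * \<mu> i \<le> c * (\<alpha> i)^2" by (simp only: mult.commute)
  qed
  then show ?thesis unfolding za on_quad[OF on ev] .
qed

lemma dim_on_span:
  fixes q :: "'n::finite \<Rightarrow> real^'m"
  assumes on: "\<And>i j. q i \<bullet> q j = (if i = j then 1 else 0)"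
  shows "dim (span (q ` I)) = card I"
proof -
  have "pairwise orthogonal (q ` I)"
    unfolding pairwise_def orthogonal_def
  proof (intro ballI impI)
    fix x y assume "x \<in> q ` I" "y \<in> q ` I" "x \<noteq> y"
    then obtain i j where "x = q i" "y = q j" "i \<noteq> j" by blast
    then show "x \<bullet> y = 0" using on[of i j] by simp
  qed
  moreover have "0 \<notin> q ` I"
  proof
    assume "0 \<in> q ` I"
    then obtain i where "q i = 0" by (metis imageE)
    then show False using on[of i i] by simp
  qed
  ultimately have "independent (q ` I)" using pairwise_orthogonal_independent by blast
  then have "card (q ` I) = dim (span (q ` I))" using indep_card_eq_dim_span by blast
  moreover have "card (q ` I) = card I"
  proof -
    have "inj_on q I" using on_inj[OF on] by (metis inj_on_subset subset_UNIV)
    then show ?thesis by (rule card_image)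
  qed
  ultimately show ?thesis by simp
qed

lemma weyl_half:
  fixes A B :: "real^('n::{finite,linorder})^('n::{finite,linorder})"
  assumes sA: "transpose A = A" and sB: "transpose B = B"
    and h: "\<And>z. z \<bullet> (A *v z) \<le> z \<bullet> (B *v z) + \<delta> * (z \<bullet> z)"
  shows "eigvals A $ k \<le> eigvals B $ k + \<delta>"
proof -
  obtain qA :: "'n::{finite,linorder} \<Rightarrow> real^('n::{finite,linorder})" and \<mu>A :: "real^('n::{finite,linorder})" where
    onA: "\<And>i j. qA i \<bullet> qA j = (if i = j then 1 else 0)" and evA: "\<And>i. A *v qA i = \<mu>A$i *\<^sub>R qA i"
    using spectral[OF sA] by blast
  obtain qB :: "'n::{finite,linorder} \<Rightarrow> real^('n::{finite,linorder})" and \<mu>B :: "real^('n::{finite,linorder})" where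
    onB: "\<And>i j. qB i \<bullet> qB j = (if i = j then 1 else 0)" and evB: "\<And>i. B *v qB i = \<mu>B$i *\<^sub>R qB i"
    using spectral[OF sB] by blast
  define a where "a = eigvals A"
  define b where "b = eigvals B"
  have ma: "msetv a = msetv \<mu>A" and sa: "sorted_desc a"
    unfolding a_def using eigvals_spec[OF onA evA] by auto
  have mb: "msetv b = msetv \<mu>B" and sb: "sorted_desc b"
    unfolding b_def using eigvals_spec[OF onB evB] by auto
  define I where "I = {i. a$k \<le> \<mu>A$i}"
  define J where "J = {i. \<mu>B$i \<le> b$k}"
  have cI: "card I = card {i. a$k \<le> a$i}" unfolding I_def using card_msetv[OF ma, of "\<lambda>v. a$k \<le> v"] by simp
  have cJ: "card J = card {i. b$i \<le> b$k}" unfolding J_def using card_msetv[OF mb, of "\<lambda>v. v \<le> b$k"] by simp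
  have "{..k} \<subseteq> {i. a$k \<le> a$i}"
  proof
    fix i assume "i \<in> {..k}"
    then have "i \<le> k" by simp
    then show "i \<in> {i. a$k \<le> a$i}" using sa unfolding sorted_desc_def by blast
  qed
  then have "card {..k} \<le> card {i. a$k \<le> a$i}" by (intro card_mono) simp_all
  moreover have "{k..} \<subseteq> {i. b$i \<le> b$k}"
  proof
    fix i assume "i \<in> {k..}"
    then have "k \<le> i" by simp
    then show "i \<in> {i. b$i \<le> b$k}" using sb unfolding sorted_desc_def by blast
  qed
  then have "card {k..} \<le> card {i. b$i \<le> b$k}" by (intro card_mono) simp_all
  moreover have "card {..k} + card {k..} = CARD('n) + 1"
  proof -
    have "card {..k} + card {k..} = card ({..k} \<union> {k..}) + card ({..k} \<inter> {k..})"
      by (rule card_Un_Int) simp_all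
    moreover have "{..k} \<union> {k..} = UNIV" by auto
    moreover have "{..k} \<inter> {k..} = {k}" by auto
    ultimately show ?thesis by simp
  qed
  ultimately have cIJ: "card I + card J \<ge> CARD('n) + 1" using cI cJ by linarith
  define S where "S = span (qA ` I)"
  define T where "T = span (qB ` J)"
  have dS: "dim S = card I" unfolding S_def by (rule dim_on_span[OF onA])
  have dT: "dim T = card J" unfolding T_def by (rule dim_on_span[OF onB])
  have "dim {x + y |x y. x \<in> S \<and> y \<in> T} + dim (S \<inter> T) = dim S + dim T"
    unfolding S_def T_def by (intro dim_sums_Int) auto
  moreover have "dim {x + y |x y. x \<in> S \<and> y \<in> T} \<le> CARD('n)" by (rule dim_subset_UNIV_cart)
  ultimately have "dim (S \<inter> T) \<noteq> 0" using dS dT cIJ by linarith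
  then have "\<not> (S \<inter> T \<subseteq> {0})" by (simp add: dim_eq_0)
  then obtain z where z: "z \<in> S" "z \<in> T" "z \<noteq> 0" by blast
  have "a$k * (z \<bullet> z) \<le> z \<bullet> (A *v z)"
    by (rule ray_ge[OF onA evA]) (use z(1) in \<open>auto simp: S_def I_def\<close>)
  also have "\<dots> \<le> z \<bullet> (B *v z) + \<delta> * (z \<bullet> z)" by (rule h)
  also have "z \<bullet> (B *v z) \<le> b$k * (z \<bullet> z)"
    by (rule ray_le[OF onB evB]) (use z(2) in \<open>auto simp: T_def J_def\<close>)
  finally have "a$k * (z \<bullet> z) \<le> (b$k + \<delta>) * (z \<bullet> z)" by (simp add: algebra_simps)
  moreover have "z \<bullet> z > 0" using z(3) by simp
  ultimately show ?thesis unfolding a_def b_def by simp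
qed

definition N1 :: "real^'n^'n \<Rightarrow> real" where
  "N1 E = (\<Sum>i\<in>UNIV. \<Sum>j\<in>UNIV. \<bar>E$i$j\<bar>)"

lemma quad_bound:
  fixes E :: "real^'n^'n"
  shows "\<bar>z \<bullet> (E *v z)\<bar> \<le> N1 E * (z \<bullet> z)"
proof -
  have "z \<bullet> (E *v z) = (\<Sum>i\<in>UNIV. \<Sum>j\<in>UNIV. E$i$j * (z$i * z$j))"
    by (simp add: inner_vec_def matrix_vector_mult_def sum_distrib_left mult_ac)
  then have "\<bar>z \<bullet> (E *v z)\<bar> \<le> (\<Sum>i\<in>UNIV. \<bar>\<Sum>j\<in>UNIV. E$i$j * (z$i * z$j)\<bar>)"
    by (simp only: sum_abs)
  also have "\<dots> \<le> (\<Sum>i\<in>UNIV. \<Sum>j\<in>UNIV. \<bar>E$i$j * (z$i * z$j)\<bar>)"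
    by (intro sum_mono sum_abs)
  also have "\<dots> \<le> (\<Sum>i\<in>UNIV. \<Sum>j\<in>UNIV. \<bar>E$i$j\<bar> * (z \<bullet> z))"
  proof (intro sum_mono)
    fix i j
    have "\<bar>z$i\<bar> \<le> norm z" "\<bar>z$j\<bar> \<le> norm z" by (simp_all add: component_le_norm_cart)
    then have "\<bar>z$i * z$j\<bar> \<le> norm z * norm z" by (simp add: abs_mult mult_mono')
    also have "\<dots> = z \<bullet> z" by (simp add: power2_norm_eq_inner[symmetric] power2_eq_square)
    finally show "\<bar>E$i$j * (z$i * z$j)\<bar> \<le> \<bar>E$i$j\<bar> * (z \<bullet> z)"
      by (simp add: abs_mult mult_left_mono)
  qed
  also have "\<dots> = N1 E * (z \<bullet> z)" unfolding N1_def by (simp add: sum_distrib_right)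
  finally show ?thesis .
qed

lemma N1_minus: "N1 (A - B) = N1 (B - A)"
  unfolding N1_def by (simp add: abs_minus_commute)

lemma weyl:
  fixes A B :: "real^('n::{finite,linorder})^('n::{finite,linorder})"
  assumes sA: "transpose A = A" and sB: "transpose B = B"
  shows "\<bar>eigvals A $ k - eigvals B $ k\<bar> \<le> N1 (B - A)"
proof -
  have h1: "z \<bullet> (A *v z) \<le> z \<bullet> (B *v z) + N1 (B - A) * (z \<bullet> z)" for z
  proof -
    have "z \<bullet> (A *v z) = z \<bullet> (B *v z) - z \<bullet> ((B - A) *v z)"
      by (simp add: matrix_vector_mult_diff_rdistrib inner_diff_right)
    then show ?thesis using quad_bound[of z "B - A"] by linarith
  qed
  have h2: "z \<bullet> (B *v z) \<le> z \<bullet> (A *v z) + N1 (B - A) * (z \<bullet> z)" for z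
  proof -
    have "z \<bullet> (B *v z) = z \<bullet> (A *v z) - z \<bullet> ((A - B) *v z)"
      by (simp add: matrix_vector_mult_diff_rdistrib inner_diff_right)
    moreover have "\<bar>z \<bullet> ((A - B) *v z)\<bar> \<le> N1 (B - A) * (z \<bullet> z)"
      using quad_bound[of z "A - B"] N1_minus[of A B] by simp
    ultimately show ?thesis by linarith
  qed
  show ?thesis using weyl_half[OF sA sB h1, of k] weyl_half[OF sB sA h2, of k] by linarith
qed

lemma Diag_sym: "transpose (Diag y) = Diag y"
  by (simp add: transpose_def Diag_def vec_eq_iff)

lemma Diag_symmats: "Diag y \<in> symmats"
  by (simp add: symmats_def Diag_sym)

lemma Diag_add_scale: "Diag x + t *\<^sub>R Diag w = Diag (x + t *\<^sub>R w)"
  by (simp add: Diag_def vec_eq_iff)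

lemma linear_Diag: "linear Diag"
  by (rule linearI) (simp_all add: Diag_def vec_eq_iff)

lemma bounded_linear_Diag: "bounded_linear (Diag :: real^'n \<Rightarrow> real^'n^'n)"
  using linear_Diag linear_conv_bounded_linear by blast

lemma N1_le_norm: "N1 (E::real^'n^'n) \<le> real CARD('n) * real CARD('n) * norm E"
proof -
  have "\<bar>E$i$j\<bar> \<le> norm E" for i j
  proof -
    have "\<bar>E$i$j\<bar> \<le> norm (E$i)" using component_le_norm_cart[of "E$i" j] by simp
    also have "\<dots> \<le> norm E" by (rule Finite_Cartesian_Product.norm_nth_le)
    finally show ?thesis .
  qed
  then have "N1 E \<le> (\<Sum>i\<in>(UNIV::'n set). \<Sum>j\<in>(UNIV::'n set). norm E)"
    unfolding N1_def by (intro sum_mono) auto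
  then show ?thesis by simp
qed

lemma sym_scaled:
  assumes "transpose (Diag x + t *\<^sub>R W) = Diag x + t *\<^sub>R W" "t \<noteq> 0"
  shows "transpose W = W"
proof -
  have "W$j$i = W$i$j" for i j
  proof (cases "i = j")
    case False
    have "(Diag x + t *\<^sub>R W)$j$i = t * W$j$i" "(Diag x + t *\<^sub>R W)$i$j = t * W$i$j"
      using False by (simp_all add: Diag_def)
    moreover have "(Diag x + t *\<^sub>R W)$j$i = (Diag x + t *\<^sub>R W)$i$j"
    proof -
      have "(transpose (Diag x + t *\<^sub>R W))$j$i = (Diag x + t *\<^sub>R W)$i$j"
        by (simp only: transpose_def vec_lambda_beta)
      then show ?thesis using assms(1) by simp
    qed
    ultimately have "t * W$j$i = t * W$i$j" by simp
    then show ?thesis using assms(2) by simp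
  qed simp
  then show ?thesis by (simp add: transpose_def vec_eq_iff)
qed

lemma core:
  fixes x v :: "real^('n::{finite,linorder})" and W :: "real^('n::{finite,linorder})^('n::{finite,linorder})"
  assumes sW: "transpose W = W" and t: "t > 0"
  shows "\<exists>z p. norm (z - v) \<le> real CARD('n) * N1 (W - Diag v) \<and> p permutes UNIV \<and>
           eigvals (Diag x + t *\<^sub>R W) = (\<chi> i. (x + t *\<^sub>R z)$(p i))"
proof -
  define A where "A = Diag (x + t *\<^sub>R v)"
  define B where "B = Diag x + t *\<^sub>R W"
  have sA: "transpose A = A" unfolding A_def by (rule Diag_sym)
  have sB: "transpose B = B" unfolding B_def using sW Diag_sym[of x]
    by (simp add: transpose_def vec_eq_iff Diag_def)
  obtain p where p: "p permutes UNIV" and pA: "eigvals A = (\<chi> i. (x + t *\<^sub>R v)$(p i))"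
    unfolding A_def using eigvals_Diag_perm by blast
  have N1AB: "N1 (A - B) = t * N1 (W - Diag v)"
  proof -
    have "(A - B)$i$j = t * (Diag v - W)$i$j" for i j
      unfolding A_def B_def by (simp add: Diag_def algebra_simps)
    then have "N1 (A - B) = (\<Sum>i\<in>UNIV. \<Sum>j\<in>UNIV. t * \<bar>(Diag v - W)$i$j\<bar>)"
      unfolding N1_def using t by (simp add: abs_mult)
    also have "\<dots> = t * N1 (Diag v - W)" unfolding N1_def by (simp add: sum_distrib_left)
    finally show ?thesis using N1_minus by metis
  qed
  define e where "e = eigvals B - eigvals A"
  have eb: "\<bar>e$k\<bar> \<le> t * N1 (W - Diag v)" for k
    using weyl[OF sA sB, of k] N1AB N1_minus[of A B] unfolding e_def by (simp add: abs_minus_commute)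
  define z where "z = (\<chi> i. v$i + e$(inv p i) / t)"
  have "eigvals B = (\<chi> i. (x + t *\<^sub>R z)$(p i))"
  proof -
    have "eigvals B $ k = (x + t *\<^sub>R z)$(p k)" for k
    proof -
      have "eigvals B $ k = eigvals A $ k + e$k" unfolding e_def by simp
      also have "\<dots> = x$(p k) + t * v$(p k) + e$k" using pA by simp
      also have "\<dots> = (x + t *\<^sub>R z)$(p k)"
        unfolding z_def using t permutes_inverses(2)[OF p] by (simp add: algebra_simps)
      finally show ?thesis .
    qed
    then show ?thesis by (simp add: vec_eq_iff)
  qed
  moreover have "norm (z - v) \<le> real CARD('n) * N1 (W - Diag v)"
  proof -
    have "norm (z - v) \<le> (\<Sum>i\<in>UNIV. \<bar>(z - v)$i\<bar>)" by (rule norm_le_l1_cart)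
    also have "\<dots> \<le> (\<Sum>i\<in>(UNIV::'n set). N1 (W - Diag v))"
    proof (intro sum_mono)
      fix i
      have "\<bar>(z - v)$i\<bar> = \<bar>e$(inv p i)\<bar> / t" unfolding z_def using t by (simp add: abs_div)
      also have "\<dots> \<le> N1 (W - Diag v)" using eb[of "inv p i"] t by (simp add: divide_le_eq mult.commute)
      finally show "\<bar>(z - v)$i\<bar> \<le> N1 (W - Diag v)" .
    qed
    also have "\<dots> = real CARD('n) * N1 (W - Diag v)" by simp
    finally show ?thesis .
  qed
  ultimately show ?thesis using p unfolding B_def by blast
qed

lemma lim_inv:
  fixes f :: "nat \<Rightarrow> 'a::metric_space"
  assumes "\<And>k. dist (f k) l < inverse (real (Suc k))"
  shows "f \<longlonglongrightarrow> l"
  unfolding lim_sequentially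
proof (intro allI impI)
  fix r :: real assume "0 < r"
  then obtain N where N: "inverse (real (Suc N)) < r" using reals_Archimedean by blast
  have "dist (f n) l < r" if "n \<ge> N" for n
  proof -
    have "inverse (real (Suc n)) \<le> inverse (real (Suc N))" using that
      by (simp add: le_imp_inverse_le)
    then show ?thesis using assms[of n] N by linarith
  qed
  then show "\<exists>N. \<forall>n\<ge>N. dist (f n) l < r" by blast
qed

lemma TC_char:
  fixes A :: "'a::real_normed_vector set"
  shows "w \<in> tangent_cone A x0 \<longleftrightarrow>
    (\<forall>e>0. \<exists>t w'. 0 < t \<and> t < e \<and> norm (w' - w) < e \<and> x0 + t *\<^sub>R w' \<in> A)"
proof
  assume "w \<in> tangent_cone A x0"
  then obtain t wk where tw: "\<And>k. t k > 0 \<and> x0 + t k *\<^sub>R wk k \<in> A" "t \<longlonglongrightarrow> 0" "wk \<longlonglongrightarrow> w"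
    unfolding tangent_cone_def by blast
  show "\<forall>e>0. \<exists>t w'. 0 < t \<and> t < e \<and> norm (w' - w) < e \<and> x0 + t *\<^sub>R w' \<in> A"
  proof (intro allI impI)
    fix e :: real assume "e > 0"
    obtain N1 where N1: "\<And>n. n \<ge> N1 \<Longrightarrow> dist (t n) 0 < e" using tw(2) \<open>e > 0\<close>
      unfolding lim_sequentially by blast
    obtain N2 where N2: "\<And>n. n \<ge> N2 \<Longrightarrow> dist (wk n) w < e" using tw(3) \<open>e > 0\<close>
      unfolding lim_sequentially by blast
    define n where "n = max N1 N2"
    have "dist (t n) 0 < e" "dist (wk n) w < e" using N1 N2 unfolding n_def by auto
    then show "\<exists>t w'. 0 < t \<and> t < e \<and> norm (w' - w) < e \<and> x0 + t *\<^sub>R w' \<in> A"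
      using tw(1)[of n] by (intro exI[of _ "t n"] exI[of _ "wk n"]) (auto simp: dist_norm)
  qed
next
  assume h: "\<forall>e>0. \<exists>t w'. 0 < t \<and> t < e \<and> norm (w' - w) < e \<and> x0 + t *\<^sub>R w' \<in> A"
  have "\<forall>k. \<exists>t w'. 0 < t \<and> t < inverse (real (Suc k)) \<and> norm (w' - w) < inverse (real (Suc k)) \<and> x0 + t *\<^sub>R w' \<in> A"
    using h by simp
  then obtain T Wk where TW: "\<And>k. 0 < T k \<and> T k < inverse (real (Suc k)) \<and>
      norm (Wk k - w) < inverse (real (Suc k)) \<and> x0 + T k *\<^sub>R Wk k \<in> A"
    by metis
  have "T \<longlonglongrightarrow> 0"
  proof (rule lim_inv)
    fix k
    have "0 < T k" "T k < inverse (real (Suc k))" using TW[of k] by auto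
    then show "dist (T k) 0 < inverse (real (Suc k))" by (simp add: dist_norm)
  qed
  moreover have "Wk \<longlonglongrightarrow> w" by (rule lim_inv) (use TW in \<open>auto simp: dist_norm\<close>)
  ultimately show "w \<in> tangent_cone A x0" unfolding tangent_cone_def using TW by blast
qed

lemma arith_bd:
  fixes c N n0 r :: real
  assumes "c \<ge> 0" "N \<le> c * c * n0" "n0 < r / (c*c*c + 1)" "r > 0"
  shows "c * N < r"
proof -
  have c3: "c*c*c \<ge> 0" using assms(1) by simp
  have "c * N \<le> c*c*c * n0" using mult_left_mono[OF assms(2) assms(1)] by (simp add: mult.assoc)
  also have "\<dots> \<le> c*c*c * (r / (c*c*c + 1))" using assms(3) c3 by (intro mult_left_mono) auto
  also have "\<dots> < r"
  proof -
    have "c*c*c * (r / (c*c*c + 1)) = r * (c*c*c / (c*c*c + 1))" by simp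
    also have "\<dots> < r * 1" using c3 assms(4) by (intro mult_strict_left_mono) auto
    finally show ?thesis by simp
  qed
  finally show ?thesis .
qed

lemma eigvals_sorted:
  fixes X :: "real^('n::{finite,linorder})^('n::{finite,linorder})"
  assumes "transpose X = X" shows "sorted_desc (eigvals X)"
proof -
  obtain q :: "'n::{finite,linorder} \<Rightarrow> real^('n::{finite,linorder})" and \<mu> :: "real^('n::{finite,linorder})" where
    "\<And>i j. q i \<bullet> q j = (if i = j then 1 else 0)" "\<And>i. X *v q i = \<mu>$i *\<^sub>R q i"
    using spectral[OF assms] by blast
  then show ?thesis using eigvals_spec(2) by blast
qed

lemma Diag_bound: "\<exists>K>0. \<forall>u. norm (Diag u :: real^'n^'n) \<le> norm (u::real^'n) * K"
  using bounded_linear.pos_bounded[OF bounded_linear_Diag] by blast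

lemma Diag_diff: "Diag a - Diag b = Diag (a - b)"
  by (simp add: Diag_def vec_eq_iff)

lemma part2:
  fixes \<Theta> :: "(real^('n::{finite,linorder})) set"
    and X :: "real^('n::{finite,linorder})^('n::{finite,linorder})"
  assumes sT: "symmetric_set \<Theta>" and XC: "X \<in> {X\<in>symmats. eigvals X \<in> \<Theta>}"
  shows "tangent_cone \<Theta> (eigvals X) =
     {v. Diag v \<in> tangent_cone {X\<in>symmats. eigvals X \<in> \<Theta>} (Diag (eigvals X))}"
proof -
  define C where "C = {X\<in>symmats. eigvals X \<in> \<Theta>}"
  define x where "x = eigvals X"
  have symT: "(\<chi> i. y$(p i)) \<in> \<Theta> \<longleftrightarrow> y \<in> \<Theta>" if "p permutes UNIV" for p and y :: "real^('n::{finite,linorder})"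
    using sT that unfolding symmetric_set_def symmetric_fun_def by metis
  obtain K :: real where K: "K > 0" "\<And>u::real^('n::{finite,linorder}). norm (Diag u :: real^('n::{finite,linorder})^('n::{finite,linorder})) \<le> norm u * K"
    using Diag_bound by blast
  define c where "c = real CARD('n::{finite,linorder})"
  have c0: "c \<ge> 0" unfolding c_def by simp
  show ?thesis unfolding C_def[symmetric] x_def[symmetric]
  proof (intro set_eqI iffI)
    fix v assume "v \<in> tangent_cone \<Theta> x"
    then have h: "\<forall>e>0. \<exists>t w'. 0 < t \<and> t < e \<and> norm (w' - v) < e \<and> x + t *\<^sub>R w' \<in> \<Theta>"
      by (simp add: TC_char)
    have "\<forall>e>0. \<exists>t W'. 0 < t \<and> t < e \<and> norm (W' - Diag v) < e \<and> Diag x + t *\<^sub>R W' \<in> C"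
    proof (intro allI impI)
      fix e :: real assume "e > 0"
      then obtain t w' where tw: "0 < t" "t < min e (e / K)" "norm (w' - v) < min e (e / K)"
          "x + t *\<^sub>R w' \<in> \<Theta>"
        using h K(1) by (metis divide_pos_pos min_def)
      have "norm (Diag w' - Diag v) \<le> norm (w' - v) * K" using K(2) Diag_diff by metis
      also have "\<dots> < (e / K) * K" using tw(3) K(1) by (intro mult_strict_right_mono) auto
      also have "\<dots> = e" using K(1) by simp
      finally have n: "norm (Diag w' - Diag v) < e" .
      obtain p where p: "p permutes UNIV" "eigvals (Diag (x + t *\<^sub>R w')) = (\<chi> i. (x + t *\<^sub>R w')$(p i))"
        using eigvals_Diag_perm by blast
      have m: "eigvals (Diag (x + t *\<^sub>R w')) \<in> \<Theta>"
        by (simp only: p(2) symT[OF p(1)] tw(4))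
      have "Diag x + t *\<^sub>R Diag w' \<in> C"
        unfolding C_def Diag_add_scale using m Diag_symmats by blast
      then show "\<exists>t W'. 0 < t \<and> t < e \<and> norm (W' - Diag v) < e \<and> Diag x + t *\<^sub>R W' \<in> C"
        using tw n by (intro exI[of _ t] exI[of _ "Diag w'"]) auto
    qed
    then show "v \<in> {v. Diag v \<in> tangent_cone C (Diag x)}" by (simp add: TC_char)
  next
    fix v assume "v \<in> {v. Diag v \<in> tangent_cone C (Diag x)}"
    then have h: "\<forall>e>0. \<exists>t W'. 0 < t \<and> t < e \<and> norm (W' - Diag v) < e \<and> Diag x + t *\<^sub>R W' \<in> C"
      by (simp add: TC_char)
    have "\<forall>e>0. \<exists>t w'. 0 < t \<and> t < e \<and> norm (w' - v) < e \<and> x + t *\<^sub>R w' \<in> \<Theta>"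
    proof (intro allI impI)
      fix e :: real assume "e > 0"
      have "c*c*c \<ge> 0" using c0 by simp
      then have pos: "e / (c*c*c + 1) > 0" using \<open>e > 0\<close> by (intro divide_pos_pos) auto
      then obtain t W where tW: "0 < t" "t < min e (e / (c*c*c + 1))"
          "norm (W - Diag v) < min e (e / (c*c*c + 1))" "Diag x + t *\<^sub>R W \<in> C"
        using h \<open>e > 0\<close> by (metis min_less_iff_conj)
      have "transpose (Diag x + t *\<^sub>R W) = Diag x + t *\<^sub>R W" using tW(4) unfolding C_def symmats_def by simp
      then have sW: "transpose W = W" using sym_scaled tW(1) by (metis less_irrefl)
      obtain z p where zp: "norm (z - v) \<le> c * N1 (W - Diag v)" "p permutes UNIV"
          "eigvals (Diag x + t *\<^sub>R W) = (\<chi> i. (x + t *\<^sub>R z)$(p i))"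
        using core[OF sW tW(1), where x=x and v=v] unfolding c_def by blast
      have "c * N1 (W - Diag v) < e"
        by (rule arith_bd[OF c0 _ _ \<open>e > 0\<close>]) (use N1_le_norm[of "W - Diag v"] tW(3) in \<open>auto simp: c_def\<close>)
      then have nz: "norm (z - v) < e" using zp(1) by linarith
      have "eigvals (Diag x + t *\<^sub>R W) \<in> \<Theta>" using tW(4) unfolding C_def by blast
      then have "x + t *\<^sub>R z \<in> \<Theta>" by (simp only: zp(3) symT[OF zp(2)])
      then show "\<exists>t w'. 0 < t \<and> t < e \<and> norm (w' - v) < e \<and> x + t *\<^sub>R w' \<in> \<Theta>"
        using tW nz by (intro exI[of _ t] exI[of _ z]) auto
    qed
    then show "v \<in> tangent_cone \<Theta> x" by (simp add: TC_char)
  qed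
qed

lemma part1:
  fixes \<theta> :: "real^('n::{finite,linorder}) \<Rightarrow> ereal"
    and g :: "real^('n::{finite,linorder})^('n::{finite,linorder}) \<Rightarrow> ereal"
  assumes g_def: "\<forall>X\<in>symmats. g X = \<theta> (eigvals X)"
    and sym: "symmetric_fun \<theta>"
    and X: "X \<in> symmats"
  shows "subderiv \<theta> (eigvals X) v = subderiv_on symmats g (Diag (eigvals X)) (Diag v)"
proof -
  define x where "x = eigvals X"
  have sx: "sorted_desc x" unfolding x_def using X eigvals_sorted unfolding symmats_def by blast
  have symth: "\<theta> (\<chi> i. y$(p i)) = \<theta> y" if "p permutes UNIV" for p and y :: "real^('n::{finite,linorder})"
    using sym that unfolding symmetric_fun_def by blast
  have gD: "g (Diag x) = \<theta> x"
    using g_def Diag_symmats eigvals_Diag_sorted[OF sx] by metis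
  have k1: "g (Diag x + t *\<^sub>R Diag w) = \<theta> (x + t *\<^sub>R w)" for t w
  proof -
    obtain p where p: "p permutes UNIV" "eigvals (Diag (x + t *\<^sub>R w)) = (\<chi> i. (x + t *\<^sub>R w)$(p i))"
      using eigvals_Diag_perm by blast
    have "g (Diag x + t *\<^sub>R Diag w) = \<theta> (eigvals (Diag (x + t *\<^sub>R w)))"
      unfolding Diag_add_scale using g_def Diag_symmats by blast
    also have "\<dots> = \<theta> (x + t *\<^sub>R w)" by (simp only: p(2) symth[OF p(1)])
    finally show ?thesis .
  qed
  obtain K :: real where K: "K > 0"
    "\<And>u::real^('n::{finite,linorder}). norm (Diag u :: real^('n::{finite,linorder})^('n::{finite,linorder})) \<le> norm u * K"
    using Diag_bound by blast
  define c where "c = real CARD('n::{finite,linorder})"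
  have c0: "c \<ge> 0" unfolding c_def by simp
  have c3: "c*c*c \<ge> 0" using c0 by simp
  define F1 where "F1 = at_right (0::real) \<times>\<^sub>F inf (nhds v) (principal UNIV)"
  define F2 where "F2 = at_right (0::real) \<times>\<^sub>F inf (nhds (Diag v)) (principal symmats)"
  define q1 where "q1 = (\<lambda>(t::real, w). (\<theta> (x + t *\<^sub>R w) - \<theta> x) / ereal t)"
  define q2 where "q2 = (\<lambda>(t::real, W). (g (Diag x + t *\<^sub>R W) - \<theta> x) / ereal t)"
  have L1: "subderiv \<theta> x v = Liminf F1 q1" unfolding subderiv_on_def F1_def q1_def by simp
  have L2: "subderiv_on symmats g (Diag x) (Diag v) = Liminf F2 q2"
    unfolding subderiv_on_def F2_def q2_def gD by simp
  have a: "Liminf F1 q1 \<le> Liminf F2 q2"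
    unfolding le_Liminf_iff
  proof (intro allI impI)
    fix y assume "y < Liminf F1 q1"
    then have "eventually (\<lambda>p. y < q1 p) F1" using le_Liminf_iff[of "Liminf F1 q1" F1 q1] by auto
    then obtain Pf Pg where P: "eventually Pf (at_right 0)" "eventually Pg (inf (nhds v) (principal UNIV))"
        "\<And>t w. Pf t \<Longrightarrow> Pg w \<Longrightarrow> y < q1 (t, w)"
      unfolding F1_def eventually_prod_filter by blast
    have "eventually Pg (nhds v)" using P(2) by simp
    then obtain r where r: "r > 0" "\<And>w. dist w v < r \<Longrightarrow> Pg w"
      unfolding eventually_nhds_metric by blast
    have pos: "r / (c*c*c + 1) > 0" using r(1) c3 by (intro divide_pos_pos) auto
    show "eventually (\<lambda>p. y < q2 p) F2"
      unfolding F2_def eventually_prod_filter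
    proof (intro exI conjI allI impI)
      show "eventually (\<lambda>t. 0 < t \<and> Pf t) (at_right 0)"
        using eventually_conj[OF eventually_at_right_less P(1)] by simp
      show "eventually (\<lambda>W. W \<in> symmats \<and> norm (W - Diag v) < r / (c*c*c + 1))
              (inf (nhds (Diag v)) (principal symmats))"
        unfolding eventually_inf_principal eventually_nhds_metric
        using pos by (intro exI[of _ "r / (c*c*c + 1)"]) (auto simp: dist_norm)
      fix t W assume t: "0 < t \<and> Pf t" and W: "W \<in> symmats \<and> norm (W - Diag v) < r / (c*c*c + 1)"
      have sW: "transpose W = W" using W unfolding symmats_def by simp
      obtain z p where zp: "norm (z - v) \<le> c * N1 (W - Diag v)" "p permutes UNIV"
          "eigvals (Diag x + t *\<^sub>R W) = (\<chi> i. (x + t *\<^sub>R z)$(p i))"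
        using core[OF sW, where x=x and v=v and t=t] t unfolding c_def by blast
      have "c * N1 (W - Diag v) < r"
        by (rule arith_bd[OF c0 _ _ r(1)]) (use N1_le_norm[of "W - Diag v"] W in \<open>auto simp: c_def\<close>)
      then have "dist z v < r" using zp(1) by (simp add: dist_norm)
      then have "y < q1 (t, z)" using P(3) t r(2) by blast
      moreover have "g (Diag x + t *\<^sub>R W) = \<theta> (x + t *\<^sub>R z)"
      proof -
        have "Diag x + t *\<^sub>R W \<in> symmats" using sW Diag_sym[of x] unfolding symmats_def
          by (simp add: transpose_def vec_eq_iff Diag_def)
        then have "g (Diag x + t *\<^sub>R W) = \<theta> (eigvals (Diag x + t *\<^sub>R W))" using g_def by blast
        also have "\<dots> = \<theta> (x + t *\<^sub>R z)" by (simp only: zp(3) symth[OF zp(2)])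
        finally show ?thesis .
      qed
      ultimately show "y < q2 (t, W)" unfolding q1_def q2_def by simp
    qed
  qed
  have b: "Liminf F2 q2 \<le> Liminf F1 q1"
    unfolding le_Liminf_iff
  proof (intro allI impI)
    fix y assume "y < Liminf F2 q2"
    then have "eventually (\<lambda>p. y < q2 p) F2" using le_Liminf_iff[of "Liminf F2 q2" F2 q2] by auto
    then obtain Pf Pg where P: "eventually Pf (at_right 0)"
        "eventually Pg (inf (nhds (Diag v)) (principal symmats))"
        "\<And>t W. Pf t \<Longrightarrow> Pg W \<Longrightarrow> y < q2 (t, W)"
      unfolding F2_def eventually_prod_filter by blast
    have "eventually (\<lambda>W. W \<in> symmats \<longrightarrow> Pg W) (nhds (Diag v))"
      using P(2) unfolding eventually_inf_principal .
    then obtain r where r: "r > 0" "\<And>W. dist W (Diag v) < r \<Longrightarrow> W \<in> symmats \<longrightarrow> Pg W"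
      unfolding eventually_nhds_metric by blast
    have pos: "r / K > 0" using r(1) K(1) by simp
    show "eventually (\<lambda>p. y < q1 p) F1"
      unfolding F1_def eventually_prod_filter
    proof (intro exI conjI allI impI)
      show "eventually Pf (at_right 0)" by (rule P(1))
      show "eventually (\<lambda>w. dist w v < r / K) (inf (nhds v) (principal UNIV))"
        unfolding eventually_inf_principal eventually_nhds_metric
        using pos by (intro exI[of _ "r / K"]) auto
      fix t w assume t: "Pf t" and w: "dist w v < r / K"
      have "dist (Diag w) (Diag v) \<le> norm (w - v) * K"
        unfolding dist_norm Diag_diff by (rule K(2))
      also have "\<dots> < (r / K) * K" using w K(1) by (intro mult_strict_right_mono) (auto simp: dist_norm)
      also have "\<dots> = r" using K(1) by simp
      finally have "Pg (Diag w)" using r(2) Diag_symmats by blast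
      then have "y < q2 (t, Diag w)" using P(3) t by blast
      then show "y < q1 (t, w)" unfolding q1_def q2_def by (simp add: k1)
    qed
  qed
  show ?thesis unfolding x_def[symmetric] L1 L2 using a b by (rule order_antisym)
qed

theorem proposition3p2:
  fixes \<theta> :: "real^('n::{finite,linorder}) \<Rightarrow> ereal"
    and g :: "real^('n::{finite,linorder})^('n::{finite,linorder}) \<Rightarrow> ereal"
  assumes g_def: "\<forall>X\<in>symmats. g X = \<theta> (eigvals X)"
    and sym: "symmetric_fun \<theta>"
    and lip: "loc_lipschitz_on_dom \<theta>"
  shows "(\<forall>X\<in>symmats. \<forall>v. \<bar>g X\<bar> \<noteq> \<infinity> \<longrightarrow>
            subderiv \<theta> (eigvals X) v = subderiv_on symmats g (Diag (eigvals X)) (Diag v))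
       \<and> (\<forall>(\<Theta>::(real^('n::{finite,linorder})) set) (C::(real^('n::{finite,linorder})^('n::{finite,linorder})) set).
            symmetric_set \<Theta> \<and> C = {X\<in>symmats. eigvals X \<in> \<Theta>} \<longrightarrow>
            (\<forall>X\<in>C. tangent_cone \<Theta> (eigvals X) =
                     {v. Diag v \<in> tangent_cone C (Diag (eigvals X))}))"
proof -
  have A: "\<forall>X\<in>symmats. \<forall>v. \<bar>g X\<bar> \<noteq> \<infinity> \<longrightarrow>
            subderiv \<theta> (eigvals X) v = subderiv_on symmats g (Diag (eigvals X)) (Diag v)"
    using part1[OF g_def sym] by blast
  have B: "\<forall>(\<Theta>::(real^('n::{finite,linorder})) set) (C::(real^('n::{finite,linorder})^('n::{finite,linorder})) set).
            symmetric_set \<Theta> \<and> C = {X\<in>symmats. eigvals X \<in> \<Theta>} \<longrightarrow>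
            (\<forall>X\<in>C. tangent_cone \<Theta> (eigvals X) =
                     {v. Diag v \<in> tangent_cone C (Diag (eigvals X))})"
  proof (intro allI impI ballI)
    fix \<Theta> :: "(real^('n::{finite,linorder})) set"
      and C :: "(real^('n::{finite,linorder})^('n::{finite,linorder})) set"
      and X :: "real^('n::{finite,linorder})^('n::{finite,linorder})"
    assume h: "symmetric_set \<Theta> \<and> C = {X\<in>symmats. eigvals X \<in> \<Theta>}" and XC: "X \<in> C"
    then show "tangent_cone \<Theta> (eigvals X) = {v. Diag v \<in> tangent_cone C (Diag (eigvals X))}"
      using part2[of \<Theta> X] by simp
  qed
  show ?thesis using A B by blast
qed

end
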